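(* For every integer $n\ge 54$, the number of arrays $\mathbf{X}\in\{0,1\}^{n\times n}$ with $|\mathbb{D}_{1,1}(\mathbf{X})|<\frac{n^2}{2}$ is at most $\sqrt{2}\cdot 2^{n^2-3n}$.
   Context: $\mathbb{D}_{1,1}(\mathbf{X})$ denotes the set of distinct $(n-1)\times(n-1)$ arrays obtainable from $\mathbf{X}$ by deleting one row and one column. (Such arrays are called bad in the paper, and the set of them is denoted $\mathcal{B}_n$.) *)

theory Defs
  imports Complex_Main
begin

definition bin_arrays :: "nat \<Rightarrow> bool list list set" where
  "bin_arrays n = {X. length X = n \<and> (\<forall>r\<in>set X. length r = n)}"

definition del_at :: "nat \<Rightarrow> 'a list \<Rightarrow> 'a list" where
  "del_at i xs = take i xs @ drop (Suc i) xs"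

definition del_row_col :: "nat \<Rightarrow> nat \<Rightarrow> bool list list \<Rightarrow> bool list list" where
  "del_row_col i j X = map (del_at j) (del_at i X)"

definition D11 :: "bool list list \<Rightarrow> bool list list set" where
  "D11 X = {del_row_col i j X | i j. i < length X \<and> j < length X}"

end

theory Submission
  imports Defs
begin

definition ins_at :: "nat \<Rightarrow> 'a \<Rightarrow> 'a list \<Rightarrow> 'a list" where
  "ins_at j b v = take j v @ b # drop j v"

definition NB :: "nat \<Rightarrow> bool list \<Rightarrow> bool list set" where
  "NB n u = (\<lambda>(j,j',b). ins_at j b (del_at j' u)) ` ({..<n} \<times> {..<n} \<times> (UNIV::bool set))"

definition Rows :: "bool list list \<Rightarrow> nat set" where
  "Rows X = {r. Suc r < length X \<and> X ! Suc r \<in> NB (length X) (X ! r)}"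

definition tr :: "bool list list \<Rightarrow> bool list list" where
  "tr X = map (\<lambda>c. map (\<lambda>row. row ! c) X) [0..<length X]"

lemma length_del_at: "i < length xs \<Longrightarrow> length (del_at i xs) = length xs - 1"
  by (simp add: del_at_def)

lemma nth_del_at: "i < length xs \<Longrightarrow> r < length xs - 1 \<Longrightarrow>
   del_at i xs ! r = xs ! (if r < i then r else Suc r)"
  by (auto simp: del_at_def nth_append min_def)

lemma ins_del: "j < length w \<Longrightarrow> w = ins_at j (w ! j) (del_at j w)"
  unfolding ins_at_def del_at_def
  by (simp add: min_def id_take_nth_drop[symmetric])

lemma NB_mem: "j < n \<Longrightarrow> j' < n \<Longrightarrow> length w > j \<Longrightarrow> del_at j w = del_at j' u \<Longrightarrow> w \<in> NB n u"
  unfolding NB_def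
  apply (rule image_eqI[where x="(j,j',w!j)"])
  using ins_del[of j w] by auto

lemma card_NB: "card (NB n u) \<le> 2 * n * n"
proof -
  have "card (NB n u) \<le> card ({..<n} \<times> {..<n} \<times> (UNIV::bool set))"
    unfolding NB_def by (rule card_image_le) auto
  also have "\<dots> = 2 * n * n" by (simp add: card_cartesian_product)
  finally show ?thesis .
qed

lemma finite_NB: "finite (NB n u)"
  unfolding NB_def by auto

lemma nth_drc: "X \<in> bin_arrays n \<Longrightarrow> i < n \<Longrightarrow> j < n \<Longrightarrow> r < n - 1 \<Longrightarrow>
   del_row_col i j X ! r = del_at j (X ! (if r < i then r else Suc r))"
  unfolding del_row_col_def bin_arrays_def
  by (simp add: length_del_at nth_del_at)

lemma nth_nth_drc: "X \<in> bin_arrays n \<Longrightarrow> i < n \<Longrightarrow> j < n \<Longrightarrow> r < n - 1 \<Longrightarrow> c < n - 1 \<Longrightarrow>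
   del_row_col i j X ! r ! c = X ! (if r < i then r else Suc r) ! (if c < j then c else Suc c)"
proof -
  assume a: "X \<in> bin_arrays n" "i < n" "j < n" "r < n - 1" "c < n - 1"
  have "X ! (if r < i then r else Suc r) \<in> set X" using a by (auto simp: bin_arrays_def)
  then have "length (X ! (if r < i then r else Suc r)) = n" using a by (auto simp: bin_arrays_def)
  then show ?thesis using a by (simp add: nth_drc nth_del_at)
qed

lemma row_coll:
  assumes X: "X \<in> bin_arrays n" and ii: "i < i'" "i' < n" and jj: "j < n" "j' < n"
    and eq: "del_row_col i j X = del_row_col i' j' X"
  shows "i \<in> Rows X \<and> i' - 1 \<in> Rows X"
proof -
  have len: "length X = n" using X by (simp add: bin_arrays_def)
  have lr: "\<And>r. r < n \<Longrightarrow> length (X ! r) = n" using X by (auto simp: bin_arrays_def)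
  have e1: "del_at j (X ! Suc i) = del_at j' (X ! i)"
    using nth_drc[OF X, of i j i] nth_drc[OF X, of i' j' i] eq ii jj by simp
  have e2: "del_at j (X ! i') = del_at j' (X ! (i' - 1))"
  proof -
    have h: "Suc (i'-1) = i'" "\<not> i'-1 < i" "i' - 1 < i'" "i' - 1 < n - 1" using ii by auto
    show ?thesis
      using nth_drc[OF X, of i j "i' - 1"] nth_drc[OF X, of i' j' "i'-1"] eq ii jj h by simp
  qed
  have "X ! Suc i \<in> NB n (X ! i)" using NB_mem[OF jj _ e1] lr ii jj by simp
  moreover have "X ! i' \<in> NB n (X ! (i'-1))" using NB_mem[OF jj _ e2] lr ii jj by simp
  ultimately show ?thesis using ii len unfolding Rows_def by auto
qed

lemma length_tr[simp]: "length (tr X) = length X"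
  by (simp add: tr_def)

lemma nth_tr: "c < length X \<Longrightarrow> tr X ! c = map (\<lambda>row. row ! c) X"
  by (simp add: tr_def)

lemma tr_bin: "X \<in> bin_arrays n \<Longrightarrow> tr X \<in> bin_arrays n"
  by (auto simp: bin_arrays_def tr_def)

lemma tr_tr: "X \<in> bin_arrays n \<Longrightarrow> tr (tr X) = X"
  unfolding bin_arrays_def
  by (auto intro!: nth_equalityI simp: nth_tr)

lemma col_coll:
  assumes X: "X \<in> bin_arrays n" and jj: "j < j'" "j' < n" and ii: "i < n" "i' < n"
    and eq: "del_row_col i j X = del_row_col i' j' X"
  shows "j \<in> Rows (tr X) \<and> j' - 1 \<in> Rows (tr X)"
proof -
  have len: "length X = n" using X by (simp add: bin_arrays_def)
  have lr: "\<And>r. r < n \<Longrightarrow> length (X ! r) = n" using X by (auto simp: bin_arrays_def)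
  have key: "del_at i (tr X ! c') = del_at i' (tr X ! c)"
    if c: "c < n - 1" "c' = (if c < j then c else Suc c)" "(if c < j' then c else Suc c) = c" for c c'
  proof (rule nth_equalityI)
    have c'n: "c' < n" using c by auto
    show "length (del_at i (tr X ! c')) = length (del_at i' (tr X ! c))"
      using c'n c ii len by (simp add: length_del_at nth_tr)
    fix r assume r: "r < length (del_at i (tr X ! c'))"
    then have r': "r < n - 1" using c'n ii len by (simp add: length_del_at nth_tr)
    have "del_at i (tr X ! c') ! r = X ! (if r < i then r else Suc r) ! c'"
      using r' c'n ii len by (simp add: length_del_at nth_tr nth_del_at)
    also have "\<dots> = del_row_col i j X ! r ! c"
      using nth_nth_drc[OF X ii(1) _ r' c(1)] jj c by simp
    also have "\<dots> = del_row_col i' j' X ! r ! c" using eq by simp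
    also have "\<dots> = X ! (if r < i' then r else Suc r) ! c"
      using nth_nth_drc[OF X ii(2) jj(2) r' c(1)] c by simp
    also have "\<dots> = del_at i' (tr X ! c) ! r"
      using r' c ii len by (simp add: length_del_at nth_tr nth_del_at)
    finally show "del_at i (tr X ! c') ! r = del_at i' (tr X ! c) ! r" .
  qed
  have e1: "del_at i (tr X ! Suc j) = del_at i' (tr X ! j)"
    using key[of j "Suc j"] jj by simp
  have e2: "del_at i (tr X ! j') = del_at i' (tr X ! (j' - 1))"
    using key[of "j' - 1" j'] jj by simp
  have "tr X ! Suc j \<in> NB n (tr X ! j)" using NB_mem[OF ii _ e1] ii jj len by (simp add: nth_tr)
  moreover have "tr X ! j' \<in> NB n (tr X ! (j'-1))" using NB_mem[OF ii _ e2] ii jj len by (simp add: nth_tr)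
  ultimately show ?thesis using jj len unfolding Rows_def by auto
qed

lemma Rows_sub: "Rows X \<subseteq> {..<length X}"
  unfolding Rows_def by auto

lemma D11_img: "D11 X = (\<lambda>(i,j). del_row_col i j X) ` ({..<length X} \<times> {..<length X})"
  unfolding D11_def by auto

lemma D11_lower:
  assumes X: "X \<in> bin_arrays n" and r1: "4 * card (Rows X) < n" and r2: "4 * card (Rows (tr X)) < n"
  shows "n ^ 2 \<le> 2 * card (D11 X)"
proof -
  have len: "length X = n" using X by (simp add: bin_arrays_def)
  define G1 where "G1 = {..<n} - Rows X"
  define G2 where "G2 = {..<n} - Rows (tr X)"
  let ?f = "\<lambda>(i,j). del_row_col i j X"
  have inj: "inj_on ?f (G1 \<times> G2)"
  proof (rule inj_onI)
    fix p q assume a0: "p \<in> G1 \<times> G2" "q \<in> G1 \<times> G2" "?f p = ?f q"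
    obtain i j where p: "p = (i,j)" by (cases p)
    obtain i' j' where q: "q = (i',j')" by (cases q)
    have a: "(i, j) \<in> G1 \<times> G2" "(i', j') \<in> G1 \<times> G2" using a0 p q by auto
    have e: "del_row_col i j X = del_row_col i' j' X" using a0 p q by simp
    have b: "i < n" "i' < n" "j < n" "j' < n" "i \<notin> Rows X" "i' \<notin> Rows X"
      "j \<notin> Rows (tr X)" "j' \<notin> Rows (tr X)"
      using a by (auto simp: G1_def G2_def)
    have "i = i'"
    proof (rule ccontr)
      assume "i \<noteq> i'"
      then consider "i < i'" | "i' < i" by linarith
      then show False
      proof cases
        case 1 then show ?thesis using row_coll[OF X 1 b(2) b(3) b(4) e] b by simp
      next
        case 2 then show ?thesis using row_coll[OF X 2 b(1) b(4) b(3) e[symmetric]] b by simp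
      qed
    qed
    moreover have "j = j'"
    proof (rule ccontr)
      assume "j \<noteq> j'"
      then consider "j < j'" | "j' < j" by linarith
      then show False
      proof cases
        case 1 then show ?thesis using col_coll[OF X 1 b(4) b(1) b(2) e] b by simp
      next
        case 2 then show ?thesis using col_coll[OF X 2 b(3) b(2) b(1) e[symmetric]] b by simp
      qed
    qed
    ultimately show "p = q" using p q by simp
  qed
  have sub: "?f ` (G1 \<times> G2) \<subseteq> D11 X"
    unfolding D11_img len G1_def G2_def by auto
  have fin: "finite (D11 X)" unfolding D11_img by simp
  have "card G1 * card G2 = card (G1 \<times> G2)" by (simp add: card_cartesian_product)
  also have "\<dots> = card (?f ` (G1 \<times> G2))" using inj by (simp add: card_image)
  also have "\<dots> \<le> card (D11 X)" using card_mono[OF fin sub] .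
  finally have c: "card G1 * card G2 \<le> card (D11 X)" .
  have g1: "n - card (Rows X) \<le> card G1"
    unfolding G1_def using diff_card_le_card_Diff[of "Rows X" "{..<n}"] Rows_sub[of X] len
    by (simp add: finite_subset)
  have g2: "n - card (Rows (tr X)) \<le> card G2"
    unfolding G2_def using diff_card_le_card_Diff[of "Rows (tr X)" "{..<n}"] Rows_sub[of "tr X"] len
    by (simp add: finite_subset)
  have h1: "3 * n + 1 \<le> 4 * card G1" using g1 r1 by linarith
  have h2: "3 * n + 1 \<le> 4 * card G2" using g2 r2 by linarith
  have "(3 * n + 1) * (3 * n + 1) \<le> (4 * card G1) * (4 * card G2)"
    using mult_le_mono[OF h1 h2] .
  then have "8 * n ^ 2 \<le> 16 * (card G1 * card G2)" by (simp add: power2_eq_square algebra_simps)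
  then show ?thesis using c by linarith
qed

lemma fin_len: "finite {w::bool list. length w = n}"
  using finite_lists_length_eq[of "UNIV::bool set" n] by simp

lemma card_len: "card {w::bool list. length w = n} = 2 ^ n"
  using card_lists_length_eq[of "UNIV::bool set" n] by simp

definition T :: "nat \<Rightarrow> nat \<Rightarrow> nat set \<Rightarrow> bool list list set" where
  "T n m S = {X. length X = m \<and> (\<forall>row\<in>set X. length row = n) \<and>
      (\<forall>r\<in>S. Suc r < m \<longrightarrow> X ! Suc r \<in> NB n (X ! r))}"

lemma finite_T: "finite (T n m S)"
proof (rule finite_subset)
  show "T n m S \<subseteq> {xs. set xs \<subseteq> {w. length w = n} \<and> length xs = m}"
    unfolding T_def by auto
  show "finite {xs. set xs \<subseteq> {w::bool list. length w = n} \<and> length xs = m}"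
    by (rule finite_lists_length_eq[OF fin_len])
qed

lemma card_T: "card (T n (Suc m) S) \<le> 2 ^ n * (\<Prod>r<m. if r \<in> S then 2 * n * n else 2 ^ n)"
proof (induction m)
  case 0
  have "T n (Suc 0) S \<subseteq> (\<lambda>w. [w]) ` {w. length w = n}"
  proof
    fix X assume "X \<in> T n (Suc 0) S"
    then have "length X = 1" "\<forall>row\<in>set X. length row = n" unfolding T_def by auto
    then obtain w where "X = [w]" "length w = n" by (cases X) auto
    then show "X \<in> (\<lambda>w. [w]) ` {w. length w = n}" by auto
  qed
  then have "card (T n (Suc 0) S) \<le> card ((\<lambda>w. [w]) ` {w::bool list. length w = n})"
    by (intro card_mono finite_imageI fin_len)
  also have "\<dots> \<le> 2 ^ n" using card_image_le[OF fin_len, of "\<lambda>w. [w]" n] card_len[of n] by simp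
  finally show ?case by simp
next
  case (Suc m)
  define W where "W X = {w. length w = n \<and> (m \<in> S \<longrightarrow> w \<in> NB n (X ! m))}" for X
  define h where "h = (if m \<in> S then 2 * n * n else (2::nat) ^ n)"
  have finW: "finite (W X)" for X
    by (rule finite_subset[OF _ fin_len[of n]]) (auto simp: W_def)
  have cW: "card (W X) \<le> h" for X
  proof (cases "m \<in> S")
    case True
    then have "W X \<subseteq> NB n (X ! m)" by (auto simp: W_def)
    then have "card (W X) \<le> card (NB n (X ! m))" by (intro card_mono finite_NB)
    then show ?thesis using card_NB[of n "X ! m"] True by (simp add: h_def)
  next
    case False
    then have "W X = {w. length w = n}" by (auto simp: W_def)
    then show ?thesis using False card_len by (simp add: h_def)
  qed
  have sub: "T n (Suc (Suc m)) S \<subseteq> (\<lambda>(X,w). X @ [w]) ` (SIGMA X: T n (Suc m) S. W X)"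
  proof
    fix X assume X: "X \<in> T n (Suc (Suc m)) S"
    then have lX: "length X = Suc (Suc m)" and rl: "\<forall>row\<in>set X. length row = n"
      and nb: "\<forall>r\<in>S. Suc r < Suc (Suc m) \<longrightarrow> X ! Suc r \<in> NB n (X ! r)"
      unfolding T_def by auto
    have eqX: "X = butlast X @ [last X]" using lX
      by (metis append_butlast_last_id list.size(3) nat.distinct(1))
    have lb: "length (butlast X) = Suc m" using lX by simp
    have nbt: "\<And>r. r < Suc m \<Longrightarrow> butlast X ! r = X ! r" using lX by (simp add: nth_butlast)
    have "butlast X \<in> T n (Suc m) S"
      unfolding T_def using lb rl nb nbt
      by (auto dest: in_set_butlastD)
    moreover have "X \<noteq> []" using lX by auto
    moreover have "last X \<in> W (butlast X)"
    proof -
      have "last X = X ! Suc m" using lX \<open>X \<noteq> []\<close> by (simp add: last_conv_nth)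
      moreover have "length (last X) = n" using rl \<open>X \<noteq> []\<close> by (simp add: last_in_set)
      ultimately show ?thesis using nb nbt[of m] by (auto simp: W_def)
    qed
    ultimately show "X \<in> (\<lambda>(X,w). X @ [w]) ` (SIGMA X: T n (Suc m) S. W X)"
      using eqX by (auto intro!: image_eqI[where x="(butlast X, last X)"])
  qed
  have "card (T n (Suc (Suc m)) S) \<le> card ((\<lambda>(X,w). X @ [w]) ` (SIGMA X: T n (Suc m) S. W X))"
    by (intro card_mono finite_imageI finite_SigmaI finite_T finW sub)
  also have "\<dots> \<le> card (SIGMA X: T n (Suc m) S. W X)" by (rule card_image_le) (simp add: finite_T finW)
  also have "\<dots> = (\<Sum>X\<in>T n (Suc m) S. card (W X))" by (simp add: finite_T finW)
  also have "\<dots> \<le> (\<Sum>X\<in>T n (Suc m) S. h)" by (intro sum_mono cW)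
  also have "\<dots> = card (T n (Suc m) S) * h" by simp
  also have "\<dots> \<le> (2 ^ n * (\<Prod>r<m. if r \<in> S then 2 * n * n else 2 ^ n)) * h"
    using Suc.IH by simp
  also have "\<dots> = 2 ^ n * (\<Prod>r<Suc m. if r \<in> S then 2 * n * n else 2 ^ n)"
    by (simp add: h_def)
  finally show ?case .
qed

lemma prod_S:
  assumes "S \<subseteq> {..<m}" "card S = K"
  shows "(\<Prod>r<m. if r \<in> S then a else b) = a ^ K * b ^ (m - K)"
proof -
  have fS: "finite S" using assms(1) finite_subset by blast
  have "(\<Prod>r<m. if r \<in> S then a else b) = (\<Prod>r\<in>{..<m} \<inter> {x. x \<in> S}. a) * (\<Prod>r\<in>{..<m} \<inter> - {x. x \<in> S}. b)"
    by (rule prod.If_cases) simp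
  also have "{..<m} \<inter> {x. x \<in> S} = S" using assms(1) by auto
  also have "{..<m} \<inter> - {x. x \<in> S} = {..<m} - S" by auto
  finally have e: "(\<Prod>r<m. if r \<in> S then a else b) = (\<Prod>r\<in>S. a) * (\<Prod>r\<in>{..<m} - S. b)" .
  have "card ({..<m} - S) = m - K" using assms fS by (simp add: card_Diff_subset)
  then show ?thesis using e assms by simp
qed

lemma card_rowbad:
  assumes n: "1 \<le> n" and K: "K \<le> n - 1"
  shows "card {X \<in> bin_arrays n. K \<le> card (Rows X)} \<le>
           (n - 1 choose K) * (2 ^ n * ((2 * n * n) ^ K * (2 ^ n) ^ (n - 1 - K)))"
proof -
  define Subs where "Subs = {S. S \<subseteq> {..<n-1} \<and> card S = K}"
  have fSubs: "finite Subs" unfolding Subs_def by (rule finite_subset[of _ "Pow {..<n-1}"]) auto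
  have sub: "{X \<in> bin_arrays n. K \<le> card (Rows X)} \<subseteq> (\<Union>S\<in>Subs. T n n S)"
  proof
    fix X assume "X \<in> {X \<in> bin_arrays n. K \<le> card (Rows X)}"
    then have X: "X \<in> bin_arrays n" and c: "K \<le> card (Rows X)" by auto
    have len: "length X = n" using X by (simp add: bin_arrays_def)
    obtain S where S: "S \<subseteq> Rows X" "card S = K" using obtain_subset_with_card_n[OF c] by blast
    have "Rows X \<subseteq> {..<n-1}" unfolding Rows_def len by auto
    then have "S \<in> Subs" using S unfolding Subs_def by auto
    moreover have "X \<in> T n n S" using X S len unfolding T_def bin_arrays_def Rows_def by auto
    ultimately show "X \<in> (\<Union>S\<in>Subs. T n n S)" by blast
  qed
  have "card {X \<in> bin_arrays n. K \<le> card (Rows X)} \<le> card (\<Union>S\<in>Subs. T n n S)"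
    by (intro card_mono sub finite_UN_I fSubs finite_T)
  also have "\<dots> \<le> (\<Sum>S\<in>Subs. card (T n n S))" by (rule card_UN_le[OF fSubs])
  also have "\<dots> \<le> (\<Sum>S\<in>Subs. 2 ^ n * ((2 * n * n) ^ K * (2 ^ n) ^ (n - 1 - K)))"
  proof (rule sum_mono)
    fix S assume "S \<in> Subs"
    then have S: "S \<subseteq> {..<n-1}" "card S = K" unfolding Subs_def by auto
    have "card (T n (Suc (n-1)) S) \<le> 2 ^ n * (\<Prod>r<n-1. if r \<in> S then 2 * n * n else 2 ^ n)"
      by (rule card_T)
    also have "\<dots> = 2 ^ n * ((2 * n * n) ^ K * (2 ^ n) ^ (n - 1 - K))" using prod_S[OF S] by simp
    finally show "card (T n n S) \<le> 2 ^ n * ((2 * n * n) ^ K * (2 ^ n) ^ (n - 1 - K))"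
      using n by simp
  qed
  also have "\<dots> = card Subs * (2 ^ n * ((2 * n * n) ^ K * (2 ^ n) ^ (n - 1 - K)))" by simp
  also have "card Subs = (n - 1 choose K)" unfolding Subs_def using n_subsets[of "{..<n-1}" K] by simp
  finally show ?thesis .
qed

lemma card_colbad:
  "card {X \<in> bin_arrays n. K \<le> card (Rows (tr X))} \<le> card {X \<in> bin_arrays n. K \<le> card (Rows X)}"
proof -
  have fin: "finite {X \<in> bin_arrays n. K \<le> card (Rows X)}"
    by (rule finite_subset[OF _ finite_T[of n n "{}"]]) (auto simp: T_def bin_arrays_def)
  have inj: "inj_on tr {X \<in> bin_arrays n. K \<le> card (Rows (tr X))}"
    by (rule inj_onI) (metis (no_types, lifting) mem_Collect_eq tr_tr)
  show ?thesis
    by (rule card_inj_on_le[OF inj _ fin]) (auto simp: tr_bin)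
qed

lemma pow_big: "54 \<le> n \<Longrightarrow> 2 * n * n * 2 ^ 16 \<le> (2::nat) ^ n"
proof (induction n rule: dec_induct)
  case base
  then show ?case by simp
next
  case (step m)
  have "2 * Suc m * Suc m * 2 ^ 16 \<le> 2 * (2 * m * m * 2 ^ 16)"
  proof -
    have "54 * m \<le> m * m" using step(1) by simp
    moreover have "Suc m * Suc m = m * m + 2 * m + 1" by simp
    ultimately have "Suc m * Suc m \<le> 2 * (m * m)" using step(1) by linarith
    then show ?thesis by simp
  qed
  also have "\<dots> \<le> 2 * 2 ^ m" using step(3) by simp
  finally show ?case by simp
qed

lemma numeric:
  assumes n: "54 \<le> n" and K: "K = (n + 3) div 4"
  shows "2 * ((n - 1 choose K) * (2 ^ n * ((2 * n * n) ^ K * (2 ^ n) ^ (n - 1 - K))))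
          \<le> (2::nat) ^ (n * n - 3 * n)"
proof -
  have Kn: "K \<le> n - 1" "4 * n \<le> 16 * K" using K n by auto
  have a: "(2 * n * n) ^ K * 2 ^ (16 * K) \<le> (2::nat) ^ (n * K)"
  proof -
    have "(2 * n * n * 2 ^ 16) ^ K \<le> ((2::nat) ^ n) ^ K" by (rule power_mono[OF pow_big[OF n]]) simp
    moreover have "(2 * n * n * 2 ^ 16) ^ K = (2 * n * n) ^ K * (2::nat) ^ (16 * K)"
      by (simp only: power_mult_distrib[of "2*n*n" "2^16"] power_mult)
    moreover have "((2::nat) ^ n) ^ K = 2 ^ (n * K)" by (simp only: power_mult)
    ultimately show ?thesis by simp
  qed
  have b: "((2::nat) ^ n) ^ (n - 1 - K) = 2 ^ (n * (n - 1 - K))" by (simp only: power_mult)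
  have c: "2 * (n - 1 choose K) \<le> 2 ^ n"
  proof -
    have "(n - 1 choose K) \<le> 2 ^ (n - 1)" by (rule binomial_le_pow2)
    then have "2 * (n - 1 choose K) \<le> 2 * 2 ^ (n - 1)" by simp
    also have "\<dots> = 2 ^ n" using n by (cases n) auto
    finally show ?thesis .
  qed
  have ex: "n + n + (n * K + n * (n - 1 - K)) \<le> (n * n - 3 * n) + 16 * K"
  proof -
    have "n * K + n * (n - 1 - K) = n * (n - 1)" using Kn
      by (metis add_mult_distrib2 le_add_diff_inverse)
    moreover have "n * (n - 1) + n = n * n" using n by (cases n) auto
    moreover have "3 * n \<le> n * n" using n by simp
    ultimately show ?thesis using Kn by linarith
  qed
  let ?L = "2 * ((n - 1 choose K) * (2 ^ n * ((2 * n * n) ^ K * (2 ^ n) ^ (n - 1 - K))))"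
  have "?L * 2 ^ (16 * K) = (2 * (n - 1 choose K)) * 2 ^ n * ((2 * n * n) ^ K * 2 ^ (16 * K)) * 2 ^ (n * (n - 1 - K))"
    unfolding b by (simp only: ac_simps)
  also have "\<dots> \<le> 2 ^ n * 2 ^ n * 2 ^ (n * K) * 2 ^ (n * (n - 1 - K))"
    by (intro mult_le_mono c a order.refl)
  also have "\<dots> = 2 ^ (n + n + (n * K + n * (n - 1 - K)))" by (simp add: power_add)
  also have "\<dots> \<le> 2 ^ ((n * n - 3 * n) + 16 * K)" by (rule power_increasing[OF ex]) simp
  also have "\<dots> = 2 ^ (n * n - 3 * n) * 2 ^ (16 * K)" by (simp add: power_add)
  finally show ?thesis by simp
qed

lemma divK: "c < (n + 3) div 4 \<Longrightarrow> 4 * c < (n::nat)" by presburger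
lemma divK2: "54 \<le> n \<Longrightarrow> (n + 3) div 4 \<le> (n::nat) - 1" by presburger

theorem lemma4:
  fixes n :: nat
  assumes "n \<ge> 54"
  shows "real (card {X \<in> bin_arrays n. real (card (D11 X)) < real n ^ 2 / 2})
           \<le> sqrt 2 * 2 powr (real (n ^ 2) - 3 * real n)"
proof -
  define K where "K = (n + 3) div 4"
  let ?Bad = "{X \<in> bin_arrays n. real (card (D11 X)) < real n ^ 2 / 2}"
  let ?RB = "{X \<in> bin_arrays n. K \<le> card (Rows X)}"
  let ?CB = "{X \<in> bin_arrays n. K \<le> card (Rows (tr X))}"
  have sub: "?Bad \<subseteq> ?RB \<union> ?CB"
  proof
    fix X assume "X \<in> ?Bad"
    then have X: "X \<in> bin_arrays n" and lt: "real (card (D11 X)) < real n ^ 2 / 2" by auto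
    show "X \<in> ?RB \<union> ?CB"
    proof (rule ccontr)
      assume "X \<notin> ?RB \<union> ?CB"
      then have "card (Rows X) < K" "card (Rows (tr X)) < K" using X by auto
      then have "4 * card (Rows X) < n" "4 * card (Rows (tr X)) < n" unfolding K_def by (simp_all add: divK)
      then have "n ^ 2 \<le> 2 * card (D11 X)" using D11_lower[OF X] by blast
      then have "real (n ^ 2) \<le> real (2 * card (D11 X))" by (simp only: of_nat_le_iff)
      then have "(real n) ^ 2 \<le> 2 * real (card (D11 X))" by (simp only: of_nat_power of_nat_mult of_nat_numeral)
      then show False using lt by linarith
    qed
  qed
  have finRB: "finite ?RB"
    by (rule finite_subset[OF _ finite_T[of n n "{}"]]) (auto simp: T_def bin_arrays_def)
  have finCB: "finite ?CB"
    by (rule finite_subset[OF _ finite_T[of n n "{}"]]) (auto simp: T_def bin_arrays_def)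
  have Kn: "K \<le> n - 1" unfolding K_def using assms by (rule divK2)
  have "card ?Bad \<le> card (?RB \<union> ?CB)" by (intro card_mono sub finite_UnI finRB finCB)
  also have "\<dots> \<le> card ?RB + card ?CB" by (rule card_Un_le)
  also have "\<dots> \<le> 2 * card ?RB" using card_colbad[of n K] by simp
  also have "\<dots> \<le> 2 * ((n - 1 choose K) * (2 ^ n * ((2 * n * n) ^ K * (2 ^ n) ^ (n - 1 - K))))"
  proof -
    have "card ?RB \<le> (n - 1 choose K) * (2 ^ n * ((2 * n * n) ^ K * (2 ^ n) ^ (n - 1 - K)))"
      by (rule card_rowbad) (use assms Kn in auto)
    then show ?thesis by simp
  qed
  also have "\<dots> \<le> 2 ^ (n * n - 3 * n)" by (rule numeric[OF assms K_def])
  finally have c: "card ?Bad \<le> 2 ^ (n * n - 3 * n)" .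
  have e: "real (n ^ 2) - 3 * real n = real (n * n - 3 * n)"
  proof -
    have "3 * n \<le> n * n" using assms by simp
    then show ?thesis by (simp add: power2_eq_square of_nat_diff)
  qed
  have "real (card ?Bad) \<le> 2 ^ (n * n - 3 * n)"
  proof -
    have "real (card ?Bad) \<le> real ((2::nat) ^ (n * n - 3 * n))" using c by (simp only: of_nat_le_iff)
    then show ?thesis by (simp only: of_nat_power of_nat_numeral)
  qed
  also have "(2::real) ^ (n * n - 3 * n) = 2 powr (real (n ^ 2) - 3 * real n)"
    unfolding e by (rule powr_realpow[symmetric]) simp
  also have "\<dots> \<le> sqrt 2 * 2 powr (real (n ^ 2) - 3 * real n)"
  proof -
    have "1 \<le> sqrt (2::real)" by simp
    moreover have "0 \<le> (2::real) powr (real (n ^ 2) - 3 * real n)" by simp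
    ultimately have "1 * 2 powr (real (n ^ 2) - 3 * real n) \<le> sqrt 2 * 2 powr (real (n ^ 2) - 3 * real n)"
      by (rule mult_right_mono)
    then show ?thesis by simp
  qed
  finally show ?thesis .
qed

end
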